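(* Let $V$ be a commutative unital quantale whose underlying lattice is a frame. A $V$-group $(X,a,+)$ is regular if and only if it is symmetric. Hence, when $\otimes=\wedge$ in $V$, a $V$-group is regular if and only if it is an internal group in $\mathsf{VCat}$.
   Context: A commutative unital quantale $V$ is a complete lattice with a commutative associative operation $\otimes$ with unit $k$ preserving arbitrary joins in each variable. A $V$-category $(X,a)$: $a\colon X\times X\to V$ with $k\le a(x,x)$ and $a(x,x')\otimes a(x',x'')\le a(x,x'')$; $V$-functors are maps $f$ with $a(x,x')\le b(f(x),f(x'))$, forming $\mathsf{VCat}$. $(X,a)$ is regular if $a(x_1,x_2)\otimes a(x_1,x_3)\le a(x_2,x_3)$ for all $x_1,x_2,x_3\in X$, and symmetric if $a(x,x')=a(x',x)$ for all $x,x'$. A $V$-group $(X,a,+)$ is a $V$-category with a group structure (additive, not necessarily abelian) such that $a(x_1,x_2)\otimes a(x_1',x_2')\le a(x_1+x_1',x_2+x_2')$; it is regular (resp. symmetric) if its $V$-category is. An internal group in $\mathsf{VCat}$ is a group object for the cartesian product of $\mathsf{VCat}$ (the product of $(X,a),(Y,b)$ being $X\times Y$ with $(a\wedge b)((x,y),(x',y'))=a(x,x')\wedge b(y,y')$), i.e. a group whose operation, inversion and unit are $V$-functors. *)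

theory Defs
  imports Main
begin

text \<open>A commutative unital quantale on a complete lattice 'v: tensor t, unit k.
  Join preservation in the second variable plus commutativity gives it in each variable.\<close>
definition comm_unital_quantale :: "('v::complete_lattice \<Rightarrow> 'v \<Rightarrow> 'v) \<Rightarrow> 'v \<Rightarrow> bool" where
  "comm_unital_quantale t k \<longleftrightarrow>
     (\<forall>x y z. t (t x y) z = t x (t y z)) \<and>
     (\<forall>x y. t x y = t y x) \<and>
     (\<forall>x. t k x = x) \<and>
     (\<forall>x S. t x (Sup S) = (SUP s\<in>S. t x s))"

definition frame :: "'v::complete_lattice itself \<Rightarrow> bool" where
  "frame _ \<longleftrightarrow> (\<forall>(x::'v) S. inf x (Sup S) = (SUP s\<in>S. inf x s))"

definition vcat :: "('v::complete_lattice \<Rightarrow> 'v \<Rightarrow> 'v) \<Rightarrow> 'v \<Rightarrow> ('x \<Rightarrow> 'x \<Rightarrow> 'v) \<Rightarrow> bool" where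
  "vcat t k a \<longleftrightarrow> (\<forall>x. k \<le> a x x) \<and> (\<forall>x y z. t (a x y) (a y z) \<le> a x z)"

definition vfunctor :: "('x \<Rightarrow> 'x \<Rightarrow> 'v::complete_lattice) \<Rightarrow> ('y \<Rightarrow> 'y \<Rightarrow> 'v) \<Rightarrow> ('x \<Rightarrow> 'y) \<Rightarrow> bool" where
  "vfunctor a b f \<longleftrightarrow> (\<forall>x y. a x y \<le> b (f x) (f y))"

definition vgroup :: "('v::complete_lattice \<Rightarrow> 'v \<Rightarrow> 'v) \<Rightarrow> 'v \<Rightarrow> ('x::group_add \<Rightarrow> 'x \<Rightarrow> 'v) \<Rightarrow> bool" where
  "vgroup t k a \<longleftrightarrow> vcat t k a \<and>
     (\<forall>x1 x2 y1 y2. t (a x1 x2) (a y1 y2) \<le> a (x1 + y1) (x2 + y2))"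

definition regular :: "('v::complete_lattice \<Rightarrow> 'v \<Rightarrow> 'v) \<Rightarrow> ('x \<Rightarrow> 'x \<Rightarrow> 'v) \<Rightarrow> bool" where
  "regular t a \<longleftrightarrow> (\<forall>x1 x2 x3. t (a x1 x2) (a x1 x3) \<le> a x2 x3)"

definition symmetric :: "('x \<Rightarrow> 'x \<Rightarrow> 'v) \<Rightarrow> bool" where
  "symmetric a \<longleftrightarrow> (\<forall>x y. a x y = a y x)"

definition prod_vcat :: "('x \<Rightarrow> 'x \<Rightarrow> 'v::complete_lattice) \<Rightarrow> ('y \<Rightarrow> 'y \<Rightarrow> 'v) \<Rightarrow> ('x \<times> 'y \<Rightarrow> 'x \<times> 'y \<Rightarrow> 'v)" where
  "prod_vcat a b = (\<lambda>(x, y) (x', y'). inf (a x x') (b y y'))"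

definition terminal_vcat :: "unit \<Rightarrow> unit \<Rightarrow> 'v::complete_lattice" where
  "terminal_vcat _ _ = top"

definition internal_group :: "('v::complete_lattice \<Rightarrow> 'v \<Rightarrow> 'v) \<Rightarrow> 'v \<Rightarrow> ('x::group_add \<Rightarrow> 'x \<Rightarrow> 'v) \<Rightarrow> bool" where
  "internal_group t k a \<longleftrightarrow> vcat t k a \<and>
     vfunctor (prod_vcat a a) a (\<lambda>(x, y). x + y) \<and>
     vfunctor a a uminus \<and>
     vfunctor terminal_vcat a (\<lambda>_. 0)"

end

theory Submission
  imports Defs
begin

lemma q_mono2:
  assumes "comm_unital_quantale t k" "y \<le> z"
  shows "t x y \<le> t x z"
proof -
  have "t x (Sup {y, z}) = sup (t x y) (t x z)"
  proof -
    have "t x (Sup {y, z}) = (SUP s\<in>{y, z}. t x s)"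
      using assms(1) unfolding comm_unital_quantale_def by blast
    also have "\<dots> = sup (t x y) (t x z)" by simp
    finally show ?thesis .
  qed
  moreover have "Sup {y, z} = z" using assms(2) by (simp add: sup_absorb2)
  ultimately show ?thesis by (metis sup.cobounded1)
qed

lemma q_mono1:
  assumes "comm_unital_quantale t k" "y \<le> z"
  shows "t y x \<le> t z x"
  using q_mono2[OF assms] assms(1) unfolding comm_unital_quantale_def by metis

lemma q_unit:
  assumes "comm_unital_quantale t k"
  shows "t k x = x" "t x k = x"
  using assms unfolding comm_unital_quantale_def by metis+

lemma key:
  fixes a :: "'x::group_add \<Rightarrow> 'x \<Rightarrow> 'v::complete_lattice"
  assumes q: "comm_unital_quantale t k" and g: "vgroup t k a"
  shows "a x y \<le> a (-y) (-x)"
proof -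
  have r: "k \<le> a z z" for z using g unfolding vgroup_def vcat_def by blast
  have m: "t (a x1 x2) (a y1 y2) \<le> a (x1 + y1) (x2 + y2)" for x1 x2 y1 y2
    using g unfolding vgroup_def by blast
  have "a x y = t k (a x y)" using q_unit[OF q] by simp
  also have "\<dots> \<le> t (a (-x) (-x)) (a x y)" by (rule q_mono1[OF q r])
  also have "\<dots> \<le> a 0 (-x + y)" using m[of "-x" "-x" x y] by simp
  also have "\<dots> = t (a 0 (-x + y)) k" using q_unit[OF q] by simp
  also have "\<dots> \<le> t (a 0 (-x + y)) (a (-y) (-y))" by (rule q_mono2[OF q r])
  also have "\<dots> \<le> a (0 + -y) (-x + y + -y)" by (rule m)
  also have "\<dots> = a (-y) (-x)" by (simp add: add.assoc)
  finally show ?thesis .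
qed

theorem corollary5p4:
  fixes t :: "'v::complete_lattice \<Rightarrow> 'v \<Rightarrow> 'v" and k :: 'v
    and a :: "'x::group_add \<Rightarrow> 'x \<Rightarrow> 'v"
  assumes "comm_unital_quantale t k"
    and "frame TYPE('v)"
    and "vgroup t k a"
  shows "(regular t a \<longleftrightarrow> symmetric a)
    \<and> (t = inf \<longrightarrow> (regular t a \<longleftrightarrow> internal_group t k a))"
proof -
  note q = assms(1) and g = assms(3)
  have r: "k \<le> a z z" for z using g unfolding vgroup_def vcat_def by blast
  have tr: "t (a x y) (a y z) \<le> a x z" for x y z using g unfolding vgroup_def vcat_def by blast
  have comm: "t x y = t y x" for x y using q unfolding comm_unital_quantale_def by blast
  have RS: "regular t a \<longleftrightarrow> symmetric a"
  proof
    assume R: "regular t a"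
    have "a x y \<le> a y x" for x y
    proof -
      have "a x y = t (a x y) k" using q_unit[OF q] by simp
      also have "\<dots> \<le> t (a x y) (a x x)" by (rule q_mono2[OF q r])
      also have "\<dots> \<le> a y x" using R unfolding regular_def by blast
      finally show ?thesis .
    qed
    then show "symmetric a" unfolding symmetric_def by (metis order_antisym)
  next
    assume S: "symmetric a"
    show "regular t a" unfolding regular_def
    proof (intro allI)
      fix x1 x2 x3
      show "t (a x1 x2) (a x1 x3) \<le> a x2 x3"
        using tr[of x2 x1 x3] S unfolding symmetric_def by simp
    qed
  qed
  have IG: "t = inf \<Longrightarrow> (symmetric a \<longleftrightarrow> internal_group t k a)"
  proof -
    assume ti: "t = inf"
    have "k = top"
      using q_unit(1)[OF q, of top] ti by (simp add: inf_absorb2)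
    have vc: "vcat t k a" using g unfolding vgroup_def by blast
    have pl: "vfunctor (prod_vcat a a) a (\<lambda>(x, y). x + y)"
      using g ti unfolding vgroup_def vfunctor_def prod_vcat_def by auto
    have un: "vfunctor terminal_vcat a (\<lambda>_. 0)"
      using r \<open>k = top\<close> unfolding vfunctor_def terminal_vcat_def by simp
    have "symmetric a \<longleftrightarrow> vfunctor a a uminus"
    proof
      assume S: "symmetric a"
      show "vfunctor a a uminus" unfolding vfunctor_def
        using key[OF q g] S unfolding symmetric_def by metis
    next
      assume F: "vfunctor a a uminus"
      have "a x y \<le> a y x" for x y
      proof -
        have "a x y \<le> a (-y) (-x)" by (rule key[OF q g])
        also have "\<dots> \<le> a (- (-y)) (- (-x))" using F unfolding vfunctor_def by blast
        finally show ?thesis by simp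
      qed
      then show "symmetric a" unfolding symmetric_def by (metis order_antisym)
    qed
    then show ?thesis unfolding internal_group_def using vc pl un by blast
  qed
  show ?thesis using RS IG by blast
qed

end
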